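(* Let $G=(V,E)$ be a finite simple graph of order $n$. For each collection $\mathcal{F}$ of pairwise disjoint forts of $G$, there is a feasible solution $(x,z)$ of the Fort Number Model $\mathrm{FN}(G)$ such that $|\mathcal{F}|=\sum_{i=1}^n z_i$.
   Context: $N(u)$ denotes the neighborhood of $u$. A fort of $G$ is a non-empty set $F\subseteq V$ such that no vertex $u\in V\setminus F$ has exactly one neighbor in $F$. The Fort Number Model $\mathrm{FN}(G)$ has binary variables $x_{iv}$ ($i\in\{1,\dots,n\}$, $v\in V$) and $z_i$ ($i\in\{1,\dots,n\}$), with constraints: $z_i-\sum_{u\in V}x_{iu}\leq0$ for all $i$; $x_{iu}-x_{iv}+\sum_{w\in N(u)\setminus\{v\}}x_{iw}\geq0$ for all $i$, all $v\in V$ and all $u\in N(v)$; $\sum_{i=1}^n x_{iu}\leq1$ for all $u\in V$. A feasible solution is one satisfying all constraints. *)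

theory Defs
  imports Main
begin

definition simple_graph :: "'a set \<Rightarrow> ('a \<Rightarrow> 'a \<Rightarrow> bool) \<Rightarrow> bool" where
  "simple_graph V E \<longleftrightarrow> finite V \<and> (\<forall>u v. E u v \<longrightarrow> u \<in> V \<and> v \<in> V)
     \<and> (\<forall>u. \<not> E u u) \<and> (\<forall>u v. E u v \<longrightarrow> E v u)"

definition nbhd :: "'a set \<Rightarrow> ('a \<Rightarrow> 'a \<Rightarrow> bool) \<Rightarrow> 'a \<Rightarrow> 'a set" where
  "nbhd V E u = {w \<in> V. E u w}"

definition is_fort :: "'a set \<Rightarrow> ('a \<Rightarrow> 'a \<Rightarrow> bool) \<Rightarrow> 'a set \<Rightarrow> bool" where
  "is_fort V E F \<longleftrightarrow> F \<noteq> {} \<and> F \<subseteq> V \<and>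
     (\<forall>u \<in> V - F. card (nbhd V E u \<inter> F) \<noteq> 1)"

definition FN_feasible :: "'a set \<Rightarrow> ('a \<Rightarrow> 'a \<Rightarrow> bool) \<Rightarrow> (nat \<Rightarrow> 'a \<Rightarrow> int) \<Rightarrow> (nat \<Rightarrow> int) \<Rightarrow> bool" where
  "FN_feasible V E x z \<longleftrightarrow>
     (\<forall>i \<in> {1..card V}. \<forall>v \<in> V. x i v \<in> {0, 1}) \<and>
     (\<forall>i \<in> {1..card V}. z i \<in> {0, 1}) \<and>
     (\<forall>i \<in> {1..card V}. z i - (\<Sum>u\<in>V. x i u) \<le> 0) \<and>
     (\<forall>i \<in> {1..card V}. \<forall>v \<in> V. \<forall>u \<in> nbhd V E v.
        x i u - x i v + (\<Sum>w \<in> nbhd V E u - {v}. x i w) \<ge> 0) \<and>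
     (\<forall>u \<in> V. (\<Sum>i = 1..card V. x i u) \<le> 1)"

end

theory Submission
  imports Defs
begin

theorem theorem7p2:
  fixes V :: "'a set" and E :: "'a \<Rightarrow> 'a \<Rightarrow> bool" and \<F> :: "'a set set"
  assumes "simple_graph V E"
    and "\<forall>F \<in> \<F>. is_fort V E F"
    and "\<forall>F \<in> \<F>. \<forall>F' \<in> \<F>. F \<noteq> F' \<longrightarrow> F \<inter> F' = {}"
  shows "\<exists>x z. FN_feasible V E x z \<and> int (card \<F>) = (\<Sum>i = 1..card V. z i)"
proof -
  have finV: "finite V" using assms(1) unfolding simple_graph_def by auto
  have sub: "\<And>F. F \<in> \<F> \<Longrightarrow> F \<subseteq> V \<and> F \<noteq> {}" using assms(2) unfolding is_fort_def by auto
  have finF: "finite \<F>" using sub finV by (meson Pow_iff finite_Pow_iff rev_finite_subset subsetI)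
  define k where "k = card \<F>"
  have kle: "k \<le> card V"
  proof -
    define c where "c F = (SOME v. v \<in> F)" for F :: "'a set"
    have cin: "c F \<in> F" if "F \<in> \<F>" for F using sub[OF that] unfolding c_def by (simp add: some_in_eq)
    have "inj_on c \<F>"
      by (metis (no_types, lifting) IntI assms(3) cin empty_iff inj_onI)
    moreover have "c ` \<F> \<subseteq> V" using cin sub by blast
    ultimately show ?thesis unfolding k_def using finV card_inj_on_le by blast
  qed
  obtain h where h: "bij_betw h {1..k} \<F>" using ex_bij_betw_nat_finite_1[OF finF] k_def by blast
  define x where "x i v = (if i \<in> {1..k} \<and> v \<in> h i then 1 else (0::int))" for i v
  define z where "z i = (if i \<in> {1..k} then 1 else (0::int))" for i
  have hF: "i \<in> {1..k} \<Longrightarrow> h i \<in> \<F>" for i using h bij_betwE by blast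
  have "FN_feasible V E x z"
    unfolding FN_feasible_def
  proof (intro conjI ballI)
    fix i assume i: "i \<in> {1..card V}"
    show "z i - (\<Sum>u\<in>V. x i u) \<le> 0"
    proof (cases "i \<in> {1..k}")
      case True
      then obtain v where v: "v \<in> h i" "v \<in> V" using sub hF by blast
      have "x i v \<le> (\<Sum>u\<in>V. x i u)"
        by (rule member_le_sum) (auto simp: x_def v finV)
      then show ?thesis using v True by (simp add: x_def z_def)
    next
      case False
      have "0 \<le> (\<Sum>u\<in>V. x i u)" by (rule sum_nonneg) (simp add: x_def)
      moreover have "z i = 0" using False by (simp add: z_def)
      ultimately show ?thesis by simp
    qed
  next
    fix i v u assume i: "i \<in> {1..card V}" and v: "v \<in> V" and u: "u \<in> nbhd V E v"
    have nn: "0 \<le> (\<Sum>w \<in> nbhd V E u - {v}. x i w)" by (rule sum_nonneg) (simp add: x_def)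
    show "x i u - x i v + (\<Sum>w \<in> nbhd V E u - {v}. x i w) \<ge> 0"
    proof (cases "i \<in> {1..k} \<and> v \<in> h i \<and> u \<notin> h i")
      case True
      have uV: "u \<in> V" and Euv: "E u v" using u assms(1) unfolding nbhd_def simple_graph_def by auto
      have fort: "is_fort V E (h i)" using assms(2) hF True by blast
      have "card (nbhd V E u \<inter> h i) \<noteq> 1" using fort uV True unfolding is_fort_def by blast
      moreover have vin: "v \<in> nbhd V E u \<inter> h i" using True v Euv unfolding nbhd_def by auto
      moreover have "finite (nbhd V E u \<inter> h i)" using finV unfolding nbhd_def by auto
      ultimately obtain w where w: "w \<in> nbhd V E u \<inter> h i" "w \<noteq> v"
        by (metis card_1_singletonE card_le_Suc0_iff_eq empty_iff insert_iff le_antisym card_gt_0_iff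
             Suc_leI One_nat_def)
      have "x i w \<le> (\<Sum>w \<in> nbhd V E u - {v}. x i w)"
        by (rule member_le_sum) (use w finV in \<open>auto simp: x_def nbhd_def\<close>)
      then show ?thesis using True w by (simp add: x_def)
    next
      case False
      then show ?thesis using nn by (auto simp: x_def)
    qed
  next
    fix u assume u: "u \<in> V"
    have "(\<Sum>i = 1..card V. x i u) = int (card {i \<in> {1..card V}. i \<in> {1..k} \<and> u \<in> h i})"
      unfolding x_def by (simp add: sum.If_cases Int_def) (metis (no_types, lifting))
    moreover have "card {i \<in> {1..card V}. i \<in> {1..k} \<and> u \<in> h i} \<le> Suc 0"
    proof (subst card_le_Suc0_iff_eq, simp, intro ballI)
      fix a b assume a: "a \<in> {i \<in> {1..card V}. i \<in> {1..k} \<and> u \<in> h i}"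
        and b: "b \<in> {i \<in> {1..card V}. i \<in> {1..k} \<and> u \<in> h i}"
      then have "h a = h b" using assms(3) hF by blast
      then show "a = b" using a b h unfolding bij_betw_def inj_on_def by blast
    qed
    ultimately show "(\<Sum>i = 1..card V. x i u) \<le> 1" by simp
  qed (auto simp: x_def z_def)
  moreover have "int (card \<F>) = (\<Sum>i = 1..card V. z i)"
  proof -
    have "(\<Sum>i = 1..card V. z i) = (\<Sum>i = 1..k. z i)"
      by (rule sum.mono_neutral_right) (use kle in \<open>auto simp: z_def\<close>)
    also have "\<dots> = (\<Sum>i = 1..k. 1)" by (rule sum.cong) (auto simp: z_def)
    finally show ?thesis by (simp add: k_def)
  qed
  ultimately show ?thesis by blast
qed

end
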